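(* Let $\alpha,p\ge0$ be integers and $N\in\mathbb{N}$. The spectral moments of the Laguerre unitary ensemble satisfy $$m_{N,p}^{(\mathrm{L})}=p!\sum_{j=0}^{N-1}\sum_{i=0}^{p}\binom{p}{i}\binom{\alpha+j}{i}\binom{p-i+j}{j}.$$
   Context: The Laguerre unitary ensemble (LUE) of size $N$ with parameter $\alpha$ is the random vector $(x_1,\dots,x_N)\in[0,\infty)^N$ with joint density proportional to $\prod_{1\le j<k\le N}(x_j-x_k)^2\prod_{j=1}^N x_j^{\alpha}e^{-x_j}$. Its spectral moments are $m_{N,p}^{(\mathrm{L})}=\mathbb{E}\big[\sum_{j=1}^N x_j^p\big]$. Binomial coefficients $\binom{n}{m}$ vanish for $m>n$. *)

theory Defs
  imports "HOL-Analysis.Analysis"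
begin

text \<open>Unnormalised joint density of the Laguerre unitary ensemble of size N with
  parameter alpha, as a function on (nat \<Rightarrow> real) (only coordinates 0..N-1 matter),
  supported on [0,\<infinity>)^N.\<close>
definition LUE_weight :: "nat \<Rightarrow> nat \<Rightarrow> (nat \<Rightarrow> real) \<Rightarrow> real" where
  "LUE_weight N \<alpha> x =
     of_bool (\<forall>j<N. 0 \<le> x j) *
     (\<Prod>(j,k)\<in>{(j,k). j < k \<and> k < N}. (x j - x k)^2) *
     (\<Prod>j<N. x j ^ \<alpha> * exp (- x j))"

text \<open>Spectral moment m_{N,p} = E[sum_j x_j^p], the expectation taken w.r.t. the
  normalised density (Lebesgue measure on R^N realised as a finite product measure).\<close>
definition LUE_moment :: "nat \<Rightarrow> nat \<Rightarrow> nat \<Rightarrow> real" where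
  "LUE_moment N \<alpha> p =
     (LINT x | PiM {..<N} (\<lambda>_. lborel). (\<Sum>j<N. x j ^ p) * LUE_weight N \<alpha> x) /
     (LINT x | PiM {..<N} (\<lambda>_. lborel). LUE_weight N \<alpha> x)"

end

theory Submission
  imports Defs "HOL-Computational_Algebra.Polynomial" "HOL-Combinatorics.Permutations"
    "HOL-Probability.Distributions"
begin

definition altsum :: "nat \<Rightarrow> (nat \<Rightarrow> int) \<Rightarrow> int" where
  "altsum k g = (\<Sum>m\<le>k. (-1)^m * int (k choose m) * g m)"

lemma altsum_Suc: "altsum (Suc k) g = altsum k g - altsum k (\<lambda>m. g (Suc m))"
proof -
  have "altsum (Suc k) g = g 0 + (\<Sum>i\<le>k. (-1)^(Suc i) * int (k choose i) * g (Suc i))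
      + (\<Sum>i\<le>k. (-1)^(Suc i) * int (k choose Suc i) * g (Suc i))"
    unfolding altsum_def by (simp add: sum.atMost_Suc_shift ring_distribs sum.distrib sum_subtractf sum_negf del: sum.atMost_Suc)
  moreover have "altsum k g = (\<Sum>i\<le>Suc k. (-1)^i * int (k choose i) * g i)"
    unfolding altsum_def by simp
  then have "altsum k g = g 0 + (\<Sum>i\<le>k. (-1)^(Suc i) * int (k choose Suc i) * g (Suc i))"
    by (simp add: sum.atMost_Suc_shift del: sum.atMost_Suc)
  moreover have "altsum k (\<lambda>m. g (Suc m)) = - (\<Sum>i\<le>k. (-1)^(Suc i) * int (k choose i) * g (Suc i))"
    unfolding altsum_def by (simp add: sum_negf[symmetric])
  ultimately show ?thesis by simp
qed

lemma altsum_choose: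
  "altsum k (\<lambda>m. int ((a + m) choose j)) = (if k \<le> j then (-1)^k * int (a choose (j - k)) else 0)"
proof (induction k arbitrary: a)
  case 0
  then show ?case by (simp add: altsum_def)
next
  case (Suc k)
  have "altsum (Suc k) (\<lambda>m. int ((a + m) choose j)) =
     altsum k (\<lambda>m. int ((a + m) choose j)) - altsum k (\<lambda>m. int ((Suc a + m) choose j))"
    by (simp add: altsum_Suc)
  also have "\<dots> = (if k \<le> j then (-1)^k * (int (a choose (j - k)) - int (Suc a choose (j - k))) else 0)"
    using Suc.IH[of a] Suc.IH[of "Suc a"] by (simp add: algebra_simps)
  also have "\<dots> = (if Suc k \<le> j then (-1)^Suc k * int (a choose (j - Suc k)) else 0)"
  proof (cases "Suc k \<le> j")
    case True
    then have "j - k = Suc (j - Suc k)" by simp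
    then show ?thesis using True by simp
  next
    case False
    then show ?thesis by (cases "k = j") auto
  qed
  finally show ?case .
qed

definition mom :: "nat \<Rightarrow> real poly \<Rightarrow> real" where
  "mom a q = (\<Sum>n\<le>degree q. coeff q n * fact (n + a))"

lemma mom_le: "degree q \<le> D \<Longrightarrow> mom a q = (\<Sum>n\<le>D. coeff q n * fact (n + a))"
  unfolding mom_def
  by (rule sum.mono_neutral_left) (auto simp: coeff_eq_0)

lemma mom_add: "mom a (p + q) = mom a p + mom a q"
proof -
  let ?D = "max (degree p) (degree q)"
  have "mom a (p + q) = (\<Sum>n\<le>?D. coeff (p + q) n * fact (n + a))"
    by (rule mom_le) (rule degree_add_le_max)
  also have "\<dots> = (\<Sum>n\<le>?D. coeff p n * fact (n + a)) + (\<Sum>n\<le>?D. coeff q n * fact (n + a))"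
    by (simp add: sum.distrib algebra_simps)
  also have "\<dots> = mom a p + mom a q"
    using mom_le[of p ?D a] mom_le[of q ?D a] by simp
  finally show ?thesis .
qed

lemma mom_smult: "mom a (smult c p) = c * mom a p"
proof -
  have "mom a (smult c p) = (\<Sum>n\<le>degree p. coeff (smult c p) n * fact (n + a))"
    by (rule mom_le) simp
  then show ?thesis by (simp add: mom_def sum_distrib_left algebra_simps)
qed

lemma mom_0 [simp]: "mom a 0 = 0"
  by (simp add: mom_def)

lemma mom_sum: "finite A \<Longrightarrow> mom a (\<Sum>i\<in>A. f i) = (\<Sum>i\<in>A. mom a (f i))"
  by (induction A rule: finite_induct) (auto simp: mom_add)

lemma mom_monom: "mom a (monom c n) = c * fact (n + a)"
proof -
  have "(\<Sum>i\<le>n. coeff (monom c n) i * fact (i + a)) = (\<Sum>i\<le>n. if i = n then c * fact (n + a) else 0)"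
    by (rule sum.cong) (auto simp: coeff_monom)
  then show ?thesis
    by (subst mom_le[of _ n]) (simp_all add: degree_monom_le)
qed

lemma monom_mult_smult: "monom (c::real) n * r = smult c (monom 1 n * r)"
proof -
  have "monom c n = smult c (monom 1 n)" by (simp add: smult_monom)
  then show ?thesis by (metis mult_smult_left)
qed

lemma mom_mult_left: "mom a (q * r) = (\<Sum>m\<le>degree q. coeff q m * mom a (monom 1 m * r))"
proof -
  have "q * r = (\<Sum>m\<le>degree q. smult (coeff q m) (monom 1 m * r))"
    apply (subst (1) poly_as_sum_of_monoms[symmetric])
    by (simp only: sum_distrib_right) (rule sum.cong, rule refl, rule monom_mult_smult)
  then show ?thesis by (simp add: mom_sum mom_smult)
qed

definition lcf :: "nat \<Rightarrow> nat \<Rightarrow> nat \<Rightarrow> real" where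
  "lcf a k m = (-1)^m * real (k choose m) / fact (a + m)"

definition P :: "nat \<Rightarrow> nat \<Rightarrow> real poly" where
  "P a k = (\<Sum>m\<le>k. monom (lcf a k m) m)"

lemma coeff_P: "coeff (P a k) m = (if m \<le> k then lcf a k m else 0)"
  unfolding P_def by (simp add: coeff_sum coeff_monom)

lemma degree_P: "degree (P a k) = k"
proof (rule antisym)
  show "degree (P a k) \<le> k"
    by (auto simp: coeff_P intro!: degree_le)
  show "k \<le> degree (P a k)"
    by (rule le_degree) (simp add: coeff_P lcf_def)
qed

lemma lead_P: "coeff (P a k) k = (-1)^k / fact (a + k)"
  by (simp add: coeff_P lcf_def)

lemma fact_split: "fact (n + m + a) / fact (a + m) = (fact n * real ((n + a + m) choose n) :: real)"
proof -
  have "fact n * fact (n + a + m - n) * ((n + a + m) choose n) = fact (n + a + m)"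
    by (rule binomial_fact_lemma) simp
  then have "fact n * fact (a + m) * real ((n + a + m) choose n) = (fact (n + m + a) :: real)"
    by (metis (mono_tags, lifting) add.commute add.left_commute add_diff_cancel_left' of_nat_fact of_nat_mult)
  then show ?thesis by (simp add: field_simps)
qed

lemma mom_XP: "mom a (monom 1 n * P a k) =
   fact n * (if k \<le> n then (-1)^k * real ((n + a) choose (n - k)) else 0)"
proof -
  have "mom a (monom 1 n * P a k) = (\<Sum>m\<le>k. lcf a k m * fact (n + m + a))"
    by (simp add: P_def sum_distrib_left mult_monom mom_sum mom_monom algebra_simps)
  also have "\<dots> = fact n * (\<Sum>m\<le>k. (-1)^m * real (k choose m) * real ((n + a + m) choose n))"
  proof -
    have "lcf a k m * fact (n + m + a) = fact n * ((-1)^m * real (k choose m) * real ((n + a + m) choose n))" for m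
      using fact_split[of n m a] by (simp add: lcf_def field_simps)
    then show ?thesis by (simp add: sum_distrib_left)
  qed
  also have "(\<Sum>m\<le>k. (-1)^m * real (k choose m) * real ((n + a + m) choose n)) =
       real_of_int (altsum k (\<lambda>m. int ((n + a + m) choose n)))"
    by (simp add: altsum_def)
  also have "\<dots> = (if k \<le> n then (-1)^k * real ((n + a) choose (n - k)) else 0)"
    by (subst altsum_choose) simp
  finally show ?thesis .
qed

lemma M_lt: "m < k \<Longrightarrow> mom a (monom 1 m * P a k) = 0"
  by (simp add: mom_XP)

lemma mom_PP_ortho: "j < k \<Longrightarrow> mom a (P a j * P a k) = 0"
  by (subst mom_mult_left) (simp add: degree_P M_lt)

lemma mom_PP_ortho': "j \<noteq> k \<Longrightarrow> mom a (P a j * P a k) = 0"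
  by (metis mom_PP_ortho mult.commute nat_neq_iff)

lemma mom_PP_diag: "mom a (P a k * P a k) = fact k / fact (a + k)"
proof -
  have "mom a (P a k * P a k) = (\<Sum>m\<le>k. coeff (P a k) m * mom a (monom 1 m * P a k))"
    by (subst mom_mult_left) (simp add: degree_P)
  also have "\<dots> = (\<Sum>m\<le>k. if m = k then fact k / fact (a + k) else 0)"
    by (rule sum.cong) (auto simp: mom_XP lead_P)
  finally show ?thesis by simp
qed

definition T :: "nat \<Rightarrow> nat \<Rightarrow> nat \<Rightarrow> real" where
  "T a p k = fact p * (\<Sum>i\<le>p. real ((p choose i) * ((a + k) choose i) * ((p - i + k) choose k)))"

lemma pointwise_vdm:
  "(p + m choose k) * (p + a + m choose p) =
   (\<Sum>i\<le>p. ((a + k) choose i) * ((p + k - i) choose k) * ((p + m) choose (p + k - i)))"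
proof (cases "k \<le> p + m")
  case False
  have "(\<Sum>i\<le>p. ((a + k) choose i) * ((p + k - i) choose k) * ((p + m) choose (p + k - i))) = 0"
    by (rule sum.neutral) (use False in auto)
  moreover have "(p + m choose k) = 0" using False by auto
  ultimately show ?thesis by (metis mult_zero_left)
next
  case True
  have "(p + a + m choose p) = (\<Sum>i\<le>p. ((a + k) choose i) * ((p + m - k) choose (p - i)))"
    using vandermonde[of "a + k" "p + m - k" p] True by (simp add: algebra_simps)
  then have "(p + m choose k) * (p + a + m choose p) =
     (\<Sum>i\<le>p. ((a + k) choose i) * ((p + m choose k) * ((p + m - k) choose (p - i))))"
    by (simp add: sum_distrib_left algebra_simps)
  also have "\<dots> = (\<Sum>i\<le>p. ((a + k) choose i) * ((p + k - i) choose k) * ((p + m) choose (p + k - i)))"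
  proof (rule sum.cong)
    fix i assume i: "i \<in> {..p}"
    show "((a + k) choose i) * ((p + m choose k) * ((p + m - k) choose (p - i))) =
        ((a + k) choose i) * ((p + k - i) choose k) * ((p + m) choose (p + k - i))"
    proof (cases "p + k - i \<le> p + m")
      case True
      have "(p + m choose (p + k - i)) * ((p + k - i) choose k) = (p + m choose k) * ((p + m - k) choose (p + k - i - k))"
        by (rule choose_mult) (use True i in auto)
      moreover have "p + k - i - k = p - i" using i by auto
      ultimately show ?thesis by (simp add: algebra_simps)
    next
      case False
      then have "p + m - k < p - i" using i \<open>k \<le> p + m\<close> by auto
      then show ?thesis using False by (simp add: binomial_eq_0)
    qed
  qed simp
  finally show ?thesis .
qed

lemma altsum_sum: "finite I \<Longrightarrow> altsum k (\<lambda>m. \<Sum>i\<in>I. f i m) = (\<Sum>i\<in>I. altsum k (f i))"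
  unfolding altsum_def by (simp add: sum_distrib_left sum.swap[of _ I] algebra_simps)

lemma altsum_cmult: "altsum k (\<lambda>m. c * g m) = c * altsum k g"
  unfolding altsum_def by (simp add: sum_distrib_left algebra_simps)

lemma altsum_main:
  "altsum k (\<lambda>m. int ((p + m choose k) * (p + a + m choose p))) =
   (-1)^k * (\<Sum>i\<le>p. int ((p choose i) * ((a + k) choose i) * ((p - i + k) choose k)))"
proof -
  have "altsum k (\<lambda>m. int ((p + m choose k) * (p + a + m choose p))) =
     altsum k (\<lambda>m. \<Sum>i\<le>p. int (((a + k) choose i) * ((p + k - i) choose k)) * int ((p + m) choose (p + k - i)))"
    by (simp only: pointwise_vdm of_nat_sum of_nat_mult)
  also have "\<dots> = (\<Sum>i\<le>p. int (((a + k) choose i) * ((p + k - i) choose k)) * altsum k (\<lambda>m. int ((p + m) choose (p + k - i))))"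
    by (simp add: altsum_sum altsum_cmult)
  also have "\<dots> = (\<Sum>i\<le>p. int (((a + k) choose i) * ((p + k - i) choose k)) * ((-1)^k * int (p choose i)))"
  proof (rule sum.cong)
    fix i assume i: "i \<in> {..p}"
    then have "p + k - i - k = p - i" by auto
    then show "int (((a + k) choose i) * ((p + k - i) choose k)) * altsum k (\<lambda>m. int ((p + m) choose (p + k - i))) =
       int (((a + k) choose i) * ((p + k - i) choose k)) * ((-1)^k * int (p choose i))"
      using i by (simp add: altsum_choose binomial_symmetric[symmetric])
  qed simp
  also have "\<dots> = (-1)^k * (\<Sum>i\<le>p. int ((p choose i) * ((a + k) choose i) * ((p - i + k) choose k)))"
    by (auto simp: sum_distrib_left algebra_simps intro!: sum.cong)
  finally show ?thesis .
qed

lemma choose_real: "k \<le> n \<Longrightarrow> real (n choose k) = fact n / (fact k * fact (n - k))"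
  by (simp add: binomial_fact)

lemma term_id:
  "lcf a k m * (fact (m + p) * (if k \<le> m + p then (-1)^k * real ((m + p + a) choose (m + p - k)) else 0)) =
   (fact k / fact (a + k)) * fact p * (-1)^k *
     ((-1)^m * real (k choose m) * real ((p + m choose k) * (p + a + m choose p)))"
proof (cases "k \<le> m + p")
  case False
  then show ?thesis by simp
next
  case True
  have e1: "real ((m + p + a) choose (m + p - k)) = fact (m + p + a) / (fact (m + p - k) * fact (a + k))"
    using True by (subst choose_real) (auto intro!: arg_cong[where f=fact])
  have e2: "real ((p + a + m) choose p) = fact (m + p + a) / (fact p * fact (a + m))"
    by (subst choose_real) (auto simp: algebra_simps intro!: arg_cong[where f=fact])
  have e3: "real ((p + m) choose k) = fact (m + p) / (fact k * fact (m + p - k))"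
    using True by (subst choose_real) (auto simp: algebra_simps)
  show ?thesis
    unfolding lcf_def of_nat_mult e1 e2 e3 using True by (simp add: field_simps)
qed

lemma mom_XPP: "mom a (P a k * (monom 1 p * P a k)) = (fact k / fact (a + k)) * T a p k"
proof -
  have "mom a (P a k * (monom 1 p * P a k)) =
      (\<Sum>m\<le>k. coeff (P a k) m * mom a (monom 1 m * (monom 1 p * P a k)))"
    by (subst mom_mult_left) (simp add: degree_P)
  also have "\<dots> = (\<Sum>m\<le>k. lcf a k m * mom a (monom 1 (m + p) * P a k))"
    by (rule sum.cong) (auto simp: coeff_P mult_monom mult.assoc[symmetric])
  also have "\<dots> = (\<Sum>m\<le>k. (fact k / fact (a + k)) * fact p * (-1)^k *
     ((-1)^m * real (k choose m) * real ((p + m choose k) * (p + a + m choose p))))"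
    by (rule sum.cong) (simp_all only: mom_XP term_id)
  also have "\<dots> = (fact k / fact (a + k)) * fact p * (-1)^k *
      real_of_int (altsum k (\<lambda>m. int ((p + m choose k) * (p + a + m choose p))))"
    by (simp add: altsum_def sum_distrib_left)
  also have "\<dots> = (fact k / fact (a + k)) * T a p k"
    unfolding altsum_main by (simp add: T_def)
  finally show ?thesis .
qed

definition Dt :: "(nat \<Rightarrow> real poly) \<Rightarrow> nat \<Rightarrow> (nat \<Rightarrow> real) \<Rightarrow> real" where
  "Dt Q N x = (\<Sum>\<sigma>\<in>{\<sigma>. \<sigma> permutes {..<N}}. of_int (sign \<sigma>) * (\<Prod>j<N. poly (Q (\<sigma> j)) (x j)))"

definition vprod :: "nat \<Rightarrow> (nat \<Rightarrow> real) \<Rightarrow> real" where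
  "vprod N x = (\<Prod>(j,k)\<in>{(j,k). j < k \<and> k < N}. (x k - x j))"

lemma finite_pairs: "finite {(j,k). j < k \<and> k < (N::nat)}"
  by (rule finite_subset[of _ "{..<N} \<times> {..<N}"]) auto

lemma Dt_alt:
  assumes "i < N" "j < N" "i \<noteq> j" "x i = x j"
  shows "Dt Q N x = 0"
proof -
  let ?t = "Transposition.transpose i j"
  let ?f = "\<lambda>\<sigma>. of_int (sign \<sigma>) * (\<Prod>l<N. poly (Q (\<sigma> l)) (x l))"
  have t: "?t permutes {..<N}" using assms by (intro permutes_swap_id) auto
  have "Dt Q N x = (\<Sum>\<sigma>\<in>{\<sigma>. \<sigma> permutes {..<N}}. ?f (\<sigma> \<circ> ?t))"
    unfolding Dt_def by (rule sum_permutations_compose_right[OF t])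
  also have "\<dots> = (\<Sum>\<sigma>\<in>{\<sigma>. \<sigma> permutes {..<N}}. - ?f \<sigma>)"
  proof (rule sum.cong)
    fix \<sigma> assume "\<sigma> \<in> {\<sigma>. \<sigma> permutes {..<N}}"
    then have s: "\<sigma> permutes {..<N}" by simp
    have "sign (\<sigma> \<circ> ?t) = - sign \<sigma>"
    proof -
      have "permutation \<sigma>" "permutation ?t"
        using s t by (auto intro: permutes_imp_permutation[of "{..<N}"])
      then show ?thesis using assms by (simp add: sign_compose sign_swap_id)
    qed
    moreover have "(\<Prod>l<N. poly (Q ((\<sigma> \<circ> ?t) l)) (x l)) = (\<Prod>l<N. poly (Q (\<sigma> l)) (x l))"
    proof -
      have xt: "x (?t l) = x l" for l
        using assms by (auto simp: Transposition.transpose_def)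
      have "(\<Prod>l<N. poly (Q ((\<sigma> \<circ> ?t) l)) (x l)) = (\<Prod>l<N. ((\<lambda>l. poly (Q (\<sigma> l)) (x l)) \<circ> ?t) l)"
        by (rule prod.cong) (auto simp: xt)
      also have "\<dots> = (\<Prod>l<N. poly (Q (\<sigma> l)) (x l))"
        by (rule prod.permute[OF t, symmetric])
      finally show ?thesis .
    qed
    ultimately show "?f (\<sigma> \<circ> ?t) = - ?f \<sigma>" by simp
  qed simp
  also have "\<dots> = - Dt Q N x" unfolding Dt_def by (simp add: sum_negf)
  finally show ?thesis by simp
qed

lemma vprod_Suc: "vprod (Suc N) x = vprod N x * (\<Prod>j<N. (x N - x j))"
proof -
  have eq: "{(j,k). j < k \<and> k < Suc N} = {(j,k). j < k \<and> k < N} \<union> (\<lambda>j. (j, N)) ` {..<N}"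
    by auto
  have "vprod (Suc N) x = (\<Prod>(j,k)\<in>{(j,k). j < k \<and> k < N}. (x k - x j)) *
      (\<Prod>(j,k)\<in>(\<lambda>j. (j, N)) ` {..<N}. (x k - x j))"
    unfolding vprod_def eq by (rule prod.union_disjoint) (auto simp: finite_pairs)
  also have "(\<Prod>(j,k)\<in>(\<lambda>j. (j, N)) ` {..<N}. (x k - x j)) = (\<Prod>j<N. (x N - x j))"
    by (subst prod.reindex) (auto simp: inj_on_def)
  finally show ?thesis by (simp add: vprod_def)
qed

lemma perms_Suc_fix: "{\<sigma>. \<sigma> permutes {..<Suc N} \<and> \<sigma> N = N} = {\<sigma>. \<sigma> permutes {..<N}}"
proof (intro set_eqI iffI)
  fix \<sigma> assume "\<sigma> \<in> {\<sigma>. \<sigma> permutes {..<Suc N} \<and> \<sigma> N = N}"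
  then have h: "\<sigma> permutes {..<Suc N}" and h2: "\<sigma> N = N" by auto
  have "\<sigma> permutes {..<N}"
    by (rule permutes_superset[OF h]) (use h2 in auto)
  then show "\<sigma> \<in> {\<sigma>. \<sigma> permutes {..<N}}" by simp
next
  fix \<sigma> assume "\<sigma> \<in> {\<sigma>. \<sigma> permutes {..<N}}"
  then have h: "\<sigma> permutes {..<N}" by simp
  have "\<sigma> permutes {..<Suc N}" by (rule permutes_subset[OF h]) auto
  moreover have "\<sigma> N = N" by (rule permutes_not_in[OF h]) simp
  ultimately show "\<sigma> \<in> {\<sigma>. \<sigma> permutes {..<Suc N} \<and> \<sigma> N = N}" by simp
qed

theorem vandermonde_Dt:
  assumes deg: "\<And>i. degree (Q i) = i"
  shows "Dt Q N x = (\<Prod>i<N. coeff (Q i) i) * vprod N x"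
proof (induction N arbitrary: x)
  case 0
  then show ?case by (simp add: Dt_def vprod_def)
next
  case (Suc N)
  define Qp where "Qp = (\<Sum>\<sigma>\<in>{\<sigma>. \<sigma> permutes {..<Suc N}}.
      smult (of_int (sign \<sigma>) * (\<Prod>j<N. poly (Q (\<sigma> j)) (x j))) (Q (\<sigma> N)))"
  have fin: "finite {\<sigma>. \<sigma> permutes {..<Suc N}}" by (rule finite_permutations) simp
  have poly_Qp: "poly Qp t = Dt Q (Suc N) (x(N := t))" for t
    unfolding Qp_def Dt_def poly_sum
    by (rule sum.cong) (auto simp: lessThan_Suc intro!: prod.cong)
  have sN: "\<sigma> N \<le> N" if "\<sigma> permutes {..<Suc N}" for \<sigma>
    using permutes_in_image[OF that, of N] by auto
  have deg_Qp: "degree Qp \<le> N"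
  proof (rule degree_le, intro allI impI)
    fix n assume n: "N < n"
    show "coeff Qp n = 0"
      unfolding Qp_def coeff_sum
    proof (rule sum.neutral, intro ballI)
      fix \<sigma> assume "\<sigma> \<in> {\<sigma>. \<sigma> permutes {..<Suc N}}"
      then have "degree (Q (\<sigma> N)) < n" using sN[of \<sigma>] deg n by simp
      then show "coeff (smult (of_int (sign \<sigma>) * (\<Prod>j<N. poly (Q (\<sigma> j)) (x j))) (Q (\<sigma> N))) n = 0"
        by (simp add: coeff_eq_0)
    qed
  qed
  have coeff_Qp: "coeff Qp N = coeff (Q N) N * Dt Q N x"
  proof -
    have "coeff Qp N = (\<Sum>\<sigma>\<in>{\<sigma>. \<sigma> permutes {..<Suc N}}.
        if \<sigma> N = N then coeff (Q N) N * (of_int (sign \<sigma>) * (\<Prod>j<N. poly (Q (\<sigma> j)) (x j))) else 0)"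
      unfolding Qp_def coeff_sum
    proof (rule sum.cong)
      fix \<sigma> assume "\<sigma> \<in> {\<sigma>. \<sigma> permutes {..<Suc N}}"
      then have "\<sigma> N \<le> N" using sN by auto
      moreover have c0: "\<sigma> N < N \<Longrightarrow> coeff (Q (\<sigma> N)) N = 0"
        using deg by (simp add: coeff_eq_0)
      ultimately show "coeff (smult (of_int (sign \<sigma>) * (\<Prod>j<N. poly (Q (\<sigma> j)) (x j))) (Q (\<sigma> N))) N =
          (if \<sigma> N = N then coeff (Q N) N * (of_int (sign \<sigma>) * (\<Prod>j<N. poly (Q (\<sigma> j)) (x j))) else 0)"
        by (cases "\<sigma> N = N") (simp_all add: c0)
    qed simp
    also have "\<dots> = (\<Sum>\<sigma>\<in>{\<sigma>\<in>{\<sigma>. \<sigma> permutes {..<Suc N}}. \<sigma> N = N}.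
        coeff (Q N) N * (of_int (sign \<sigma>) * (\<Prod>j<N. poly (Q (\<sigma> j)) (x j))))"
      by (rule sum.inter_filter[OF fin, symmetric])
    also have "{\<sigma>\<in>{\<sigma>. \<sigma> permutes {..<Suc N}}. \<sigma> N = N} = {\<sigma>. \<sigma> permutes {..<N}}"
      using perms_Suc_fix[of N] by simp
    also have "(\<Sum>\<sigma>\<in>{\<sigma>. \<sigma> permutes {..<N}}.
        coeff (Q N) N * (of_int (sign \<sigma>) * (\<Prod>j<N. poly (Q (\<sigma> j)) (x j)))) = coeff (Q N) N * Dt Q N x"
      unfolding Dt_def by (rule sum_distrib_left[symmetric])
    finally show ?thesis .
  qed
  show ?case
  proof (cases "inj_on x {..<N}")
    case True
    define R where "R = smult (coeff (Q N) N * Dt Q N x) (\<Prod>j<N. [:- x j, 1:])"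
    have degL: "degree (\<Prod>j<N. [:- x j, 1:]) = N"
      by (subst degree_prod_eq_sum_degree) auto
    have lcL: "coeff (\<Prod>j<N. [:- x j, 1:]) N = 1"
      using lead_coeff_prod[of "\<lambda>j. [:- x j, 1:]" "{..<N}"] degL by simp
    have "Qp = R"
    proof (rule poly_eqI_degree_lead_coeff[where n=N and A="x ` {..<N}"])
      show "coeff Qp N = coeff R N" by (simp add: R_def coeff_Qp lcL)
      show "N \<le> card (x ` {..<N})" using True by (simp add: card_image)
      show "degree Qp \<le> N" by (rule deg_Qp)
      show "degree R \<le> N" unfolding R_def using degL by (metis degree_smult_le le_trans)
      fix z assume "z \<in> x ` {..<N}"
      then obtain j where j: "j < N" "z = x j" by auto
      have "poly Qp z = 0" unfolding poly_Qp j(2)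
        by (rule Dt_alt[of j "Suc N" N]) (use j in auto)
      moreover have "poly R z = 0" unfolding R_def using j
        by (auto simp: poly_prod intro!: prod_zero)
      ultimately show "poly Qp z = poly R z" by simp
    qed
    have "Dt Q (Suc N) x = poly Qp (x N)" by (simp add: poly_Qp)
    also have "\<dots> = coeff (Q N) N * Dt Q N x * (\<Prod>j<N. (x N - x j))"
      by (simp add: \<open>Qp = R\<close> R_def poly_prod)
    also have "\<dots> = (\<Prod>i<Suc N. coeff (Q i) i) * vprod (Suc N) x"
      by (simp add: Suc.IH vprod_Suc algebra_simps)
    finally show ?thesis .
  next
    case False
    then obtain i j where ij: "i < N" "j < N" "i \<noteq> j" "x i = x j"
      by (auto simp: inj_on_def)
    have "Dt Q (Suc N) x = 0" by (rule Dt_alt[OF _ _ ij(3,4)]) (use ij in auto)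
    moreover have "vprod N x = 0" unfolding vprod_def
      by (rule prod_zero[OF finite_pairs], rule bexI[of _ "(min i j, max i j)"]) (use ij in \<open>auto simp: min_def max_def\<close>)
    then have "vprod (Suc N) x = 0" by (simp add: vprod_Suc)
    ultimately show ?thesis by simp
  qed
qed

definition wt :: "nat \<Rightarrow> real \<Rightarrow> real" where
  "wt a y = of_bool (0 \<le> y) * (y ^ a * exp (- y))"

lemma wt_pow_int: "integrable lborel (\<lambda>y. of_bool (0 \<le> y) * (y ^ n * exp (- y)) :: real) \<and>
   (LINT y|lborel. of_bool (0 \<le> y) * ((y::real) ^ n * exp (- y))) = fact n"
proof -
  have "(\<integral>\<^sup>+y. ennreal (of_bool (0 \<le> y) * (y ^ n * exp (- y))) \<partial>lborel) =
        (\<integral>\<^sup>+y. ennreal (y ^ n * exp (- y)) * indicator {0..} y \<partial>lborel)"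
    by (rule nn_integral_cong) (auto simp: indicator_def)
  also have "\<dots> = ennreal (fact n)"
    using nn_intergal_power_times_exp_Ici[of n] by simp
  finally have "(\<integral>\<^sup>+y. ennreal (of_bool (0 \<le> y) * (y ^ n * exp (- y))) \<partial>lborel) = ennreal (fact n)" .
  then show ?thesis
    by (subst (asm) nn_integral_eq_integrable) auto
qed

lemma integrable_polywt: "integrable lborel (\<lambda>y. poly q y * wt a y)"
proof -
  have "(\<lambda>y. poly q y * wt a y) =
     (\<lambda>y. \<Sum>n\<le>degree q. coeff q n * (of_bool (0 \<le> y) * (y ^ (n + a) * exp (- y))))"
    by (rule ext) (simp add: wt_def poly_altdef sum_distrib_left sum_distrib_right power_add mult_ac)
  then show ?thesis using wt_pow_int by (simp del: of_bool_less_eq_one)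
qed

lemma integral_polywt: "(LINT y|lborel. poly q y * wt a y) = mom a q"
proof -
  have "(\<lambda>y. poly q y * wt a y) =
     (\<lambda>y. \<Sum>n\<le>degree q. coeff q n * (of_bool (0 \<le> y) * (y ^ (n + a) * exp (- y))))"
    by (rule ext) (simp add: wt_def poly_altdef sum_distrib_left sum_distrib_right power_add mult_ac)
  then have "(LINT y|lborel. poly q y * wt a y) =
      (\<Sum>n\<le>degree q. LINT y|lborel. coeff q n * (of_bool (0 \<le> y) * (y ^ (n + a) * exp (- y))))"
    using wt_pow_int by (simp add: Bochner_Integration.integral_sum)
  also have "\<dots> = mom a q"
    using wt_pow_int by (simp add: mom_def)
  finally show ?thesis .
qed

lemma psf: "product_sigma_finite (\<lambda>_::nat. lborel :: real measure)"
  unfolding product_sigma_finite_def by (simp add: sigma_finite_lborel)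

definition S :: "nat \<Rightarrow> (nat \<Rightarrow> nat) set" where "S N = {\<sigma>. \<sigma> permutes {..<N}}"

lemma finite_S: "finite (S N)" unfolding S_def by (rule finite_permutations) simp

definition cst :: "nat \<Rightarrow> nat \<Rightarrow> (nat \<Rightarrow> nat) \<Rightarrow> (nat \<Rightarrow> nat) \<Rightarrow> (nat \<Rightarrow> nat) \<Rightarrow> real" where
  "cst a N e \<sigma> \<tau> = of_int (sign \<sigma> * sign \<tau>) * (\<Prod>j<N. mom a (P a (\<sigma> j) * P a (\<tau> j) * monom 1 (e j)))"

lemma J_expand:
  fixes e :: "nat \<Rightarrow> nat" and a N :: nat
  defines "F \<equiv> \<lambda>x. (Dt (P a) N x)^2 * (\<Prod>j<N. wt a (x j) * x j ^ e j)"
  shows "integrable (PiM {..<N} (\<lambda>_. lborel)) F \<and>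
    integral\<^sup>L (PiM {..<N} (\<lambda>_. lborel)) F = (\<Sum>\<sigma>\<in>S N. \<Sum>\<tau>\<in>S N. cst a N e \<sigma> \<tau>)"
proof -
  interpret product_sigma_finite "\<lambda>_::nat. lborel :: real measure" by (rule psf)
  define g where "g \<sigma> \<tau> j y = poly (P a (\<sigma> j) * P a (\<tau> j) * monom 1 (e j)) y * wt a y" for \<sigma> \<tau> :: "nat \<Rightarrow> nat" and j y
  have F_eq: "F = (\<lambda>x. \<Sum>\<sigma>\<in>S N. \<Sum>\<tau>\<in>S N. of_int (sign \<sigma> * sign \<tau>) * (\<Prod>j<N. g \<sigma> \<tau> j (x j)))"
  proof
    fix x :: "nat \<Rightarrow> real"
    have "(Dt (P a) N x)^2 = (\<Sum>\<sigma>\<in>S N. \<Sum>\<tau>\<in>S N. (of_int (sign \<sigma>) * (\<Prod>j<N. poly (P a (\<sigma> j)) (x j))) *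
          (of_int (sign \<tau>) * (\<Prod>j<N. poly (P a (\<tau> j)) (x j))))"
      unfolding Dt_def S_def power2_eq_square by (rule sum_product)
    then show "F x = (\<Sum>\<sigma>\<in>S N. \<Sum>\<tau>\<in>S N. of_int (sign \<sigma> * sign \<tau>) * (\<Prod>j<N. g \<sigma> \<tau> j (x j)))"
      unfolding F_def g_def
      by (simp add: sum_distrib_left sum_distrib_right poly_monom prod.distrib[symmetric] mult_ac)
  qed
  have gi: "integrable lborel (g \<sigma> \<tau> j)" for \<sigma> \<tau> j
    unfolding g_def by (rule integrable_polywt)
  have gI: "(LINT y|lborel. g \<sigma> \<tau> j y) = mom a (P a (\<sigma> j) * P a (\<tau> j) * monom 1 (e j))" for \<sigma> \<tau> j
    unfolding g_def by (rule integral_polywt)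
  have pi: "integrable (PiM {..<N} (\<lambda>_. lborel)) (\<lambda>x. \<Prod>j<N. g \<sigma> \<tau> j (x j))" for \<sigma> \<tau>
    by (rule product_integrable_prod) (auto simp: gi)
  have pI: "integral\<^sup>L (PiM {..<N} (\<lambda>_. lborel)) (\<lambda>x. \<Prod>j<N. g \<sigma> \<tau> j (x j)) =
       (\<Prod>j<N. mom a (P a (\<sigma> j) * P a (\<tau> j) * monom 1 (e j)))" for \<sigma> \<tau>
    by (subst product_integral_prod) (auto simp: gi gI)
  show ?thesis
    unfolding F_eq
    using pi pI by (simp add: Bochner_Integration.integral_sum cst_def)
qed

lemma perm_agree:
  assumes s: "\<sigma> permutes {..<N}" and t: "\<tau> permutes {..<N}"
    and agree: "\<And>j. j < N \<Longrightarrow> j \<noteq> l \<Longrightarrow> \<sigma> j = \<tau> j"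
  shows "\<sigma> = \<tau>"
proof
  fix j
  show "\<sigma> j = \<tau> j"
  proof (cases "j < N")
    case False
    then show ?thesis using permutes_not_in[OF s, of j] permutes_not_in[OF t, of j] by simp
  next
    case True
    show ?thesis
    proof (cases "j = l")
      case False
      then show ?thesis using agree True by simp
    next
      case jl: True
      show ?thesis
      proof (rule ccontr)
        assume ne: "\<sigma> j \<noteq> \<tau> j"
        define k where "k = inv \<tau> (\<sigma> j)"
        have tk: "\<tau> k = \<sigma> j" unfolding k_def using permutes_inverses(1)[OF t] by simp
        have "\<sigma> j < N" using permutes_in_image[OF s] True by simp
        have kN: "k < N"
        proof (rule ccontr)
          assume "\<not> k < N"
          then have "\<tau> k = k" using permutes_not_in[OF t, of k] by simp
          then show False using tk \<open>\<sigma> j < N\<close> \<open>\<not> k < N\<close> by simp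
        qed
        have "k \<noteq> l" using tk ne jl by auto
        then have "\<sigma> k = \<sigma> j" using agree[OF kN] tk by simp
        then have "k = j" using permutes_inj[OF s] by (simp add: inj_eq)
        then show False using \<open>k \<noteq> l\<close> jl by simp
      qed
    qed
  qed
qed

lemma cst_offdiag:
  assumes "\<sigma> \<in> S N" "\<tau> \<in> S N" "\<sigma> \<noteq> \<tau>" and e: "\<And>j. j \<noteq> l \<Longrightarrow> e j = 0"
  shows "cst a N e \<sigma> \<tau> = 0"
proof -
  obtain j where j: "j < N" "j \<noteq> l" "\<sigma> j \<noteq> \<tau> j"
    using perm_agree[of \<sigma> N \<tau> l] assms(1-3) unfolding S_def by blast
  have "mom a (P a (\<sigma> j) * P a (\<tau> j) * monom 1 (e j)) = 0"
    using j e[of j] by (simp add: mom_PP_ortho' monom_0 one_pCons[symmetric])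
  then show ?thesis unfolding cst_def using j
    by (auto intro!: prod_zero)
qed

definition hh :: "nat \<Rightarrow> nat \<Rightarrow> real" where "hh a k = fact k / fact (a + k)"

lemma sum_S_diag:
  assumes "\<sigma> \<in> S N" and e: "\<And>j. j \<noteq> l \<Longrightarrow> e j = 0"
  shows "(\<Sum>\<tau>\<in>S N. cst a N e \<sigma> \<tau>) = cst a N e \<sigma> \<sigma>"
proof -
  have "(\<Sum>\<tau>\<in>S N. cst a N e \<sigma> \<tau>) = cst a N e \<sigma> \<sigma> + (\<Sum>\<tau>\<in>S N - {\<sigma>}. cst a N e \<sigma> \<tau>)"
    by (rule sum.remove[OF finite_S assms(1)])
  also have "(\<Sum>\<tau>\<in>S N - {\<sigma>}. cst a N e \<sigma> \<tau>) = 0"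
  proof (rule sum.neutral, intro ballI)
    fix \<tau> assume "\<tau> \<in> S N - {\<sigma>}"
    then show "cst a N e \<sigma> \<tau> = 0"
      by (intro cst_offdiag[OF assms(1) _ _ e]) auto
  qed
  finally show ?thesis by simp
qed

lemma prod_perm_hh: "\<sigma> \<in> S N \<Longrightarrow> (\<Prod>j<N. hh a (\<sigma> j)) = (\<Prod>i<N. hh a i)"
  unfolding S_def using prod.permute[of \<sigma> "{..<N}" "hh a"] by (simp add: comp_def)

lemma sum_perm_T: "\<sigma> \<in> S N \<Longrightarrow> (\<Sum>j<N. T a p (\<sigma> j)) = (\<Sum>i<N. T a p i)"
  unfolding S_def using sum.permute[of \<sigma> "{..<N}" "T a p"] by (simp add: comp_def)

lemma cst_diag0: "\<sigma> \<in> S N \<Longrightarrow> cst a N (\<lambda>_. 0) \<sigma> \<sigma> = (\<Prod>i<N. hh a i)"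
  unfolding cst_def by (simp add: mom_PP_diag hh_def[symmetric] prod_perm_hh)

lemma cst_diagl:
  assumes "\<sigma> \<in> S N" "l < N"
  shows "cst a N (\<lambda>j. if j = l then p else 0) \<sigma> \<sigma> = (\<Prod>i<N. hh a i) * T a p (\<sigma> l)"
proof -
  have "mom a (P a (\<sigma> j) * P a (\<sigma> j) * monom 1 (if j = l then p else 0)) =
        hh a (\<sigma> j) * (if j = l then T a p (\<sigma> l) else 1)" for j
  proof (cases "j = l")
    case True
    have eqn: "P a (\<sigma> l) * P a (\<sigma> l) * monom 1 p = P a (\<sigma> l) * (monom 1 p * P a (\<sigma> l))"
      by (simp add: mult_ac)
    have ee: "(if j = l then p else 0) = p" "(if j = l then T a p (\<sigma> l) else 1) = T a p (\<sigma> l)"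
      using True by simp_all
    show ?thesis unfolding ee unfolding True eqn mom_XPP hh_def by simp
  next
    case False
    then show ?thesis by (simp add: mom_PP_diag hh_def)
  qed
  then have "cst a N (\<lambda>j. if j = l then p else 0) \<sigma> \<sigma> =
      (\<Prod>j<N. hh a (\<sigma> j) * (if j = l then T a p (\<sigma> l) else 1))"
    unfolding cst_def by simp
  also have "\<dots> = (\<Prod>j<N. hh a (\<sigma> j)) * T a p (\<sigma> l)"
    using assms(2) by (simp add: prod.distrib)
  finally show ?thesis using prod_perm_hh[OF assms(1)] by simp
qed

lemma of_bool_all_prod: "of_bool (\<forall>j<(N::nat). Q j) = (\<Prod>j<N. of_bool (Q j) :: real)"
  by (induction N) (auto simp: less_Suc_eq)

definition CC :: "nat \<Rightarrow> nat \<Rightarrow> real" where "CC a N = (\<Prod>i<N. coeff (P a i) i)"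

lemma CC_nz: "CC a N \<noteq> 0"
  unfolding CC_def by (simp add: lead_P)

lemma hh_nz: "(\<Prod>i<N. hh a i) \<noteq> 0"
  by (simp add: hh_def)

definition FF :: "nat \<Rightarrow> nat \<Rightarrow> (nat \<Rightarrow> nat) \<Rightarrow> (nat \<Rightarrow> real) \<Rightarrow> real" where
  "FF a N e x = (Dt (P a) N x)^2 * (\<Prod>j<N. wt a (x j) * x j ^ e j)"

lemma weight_eq: "LUE_weight N a x = (Dt (P a) N x)^2 / (CC a N)^2 * (\<Prod>j<N. wt a (x j))"
proof -
  have pairs: "(\<Prod>(j,k)\<in>{(j,k). j < k \<and> k < N}. (x j - x k)^2) = (vprod N x)^2"
  proof -
    have "(\<Prod>(j,k)\<in>{(j,k). j < k \<and> k < N}. (x j - x k)^2) =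
       (\<Prod>q\<in>{(j,k). j < k \<and> k < N}. (case q of (j,k) \<Rightarrow> x k - x j)^2)"
      by (rule prod.cong) (auto simp: power2_commute)
    also have "\<dots> = (\<Prod>q\<in>{(j,k). j < k \<and> k < N}. (case q of (j,k) \<Rightarrow> x k - x j))^2"
      by (rule prod_power_distrib[symmetric])
    finally show ?thesis unfolding vprod_def .
  qed
  have v: "vprod N x = Dt (P a) N x / CC a N"
    using vandermonde_Dt[of "P a" N x] CC_nz[of a N] by (simp add: degree_P CC_def field_simps)
  have w: "of_bool (\<forall>j<N. 0 \<le> x j) * (\<Prod>j<N. x j ^ a * exp (- x j)) = (\<Prod>j<N. wt a (x j))"
    unfolding of_bool_all_prod wt_def by (simp add: prod.distrib)
  show ?thesis
    unfolding LUE_weight_def pairs v using w[symmetric] by (simp add: power_divide mult_ac)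
qed

lemma num_pointwise:
  "(\<Sum>l<N. x l ^ p) * LUE_weight N a x =
   (1 / (CC a N)^2) * (\<Sum>l<N. FF a N (\<lambda>j. if j = l then p else 0) x)"
proof -
  have "(\<Prod>j<N. wt a (x j) * x j ^ (if j = l then p else 0)) = (\<Prod>j<N. wt a (x j)) * x l ^ p"
    if "l < N" for l
  proof -
    have "(\<Prod>j<N. wt a (x j) * x j ^ (if j = l then p else 0)) =
        (\<Prod>j<N. wt a (x j)) * (\<Prod>j<N. (if j = l then x l ^ p else 1))"
      by (subst prod.distrib[symmetric]) (rule prod.cong, auto)
    also have "(\<Prod>j<N. (if j = l then x l ^ p else 1)) = x l ^ p"
      using that by simp
    finally show ?thesis .
  qed
  then show ?thesis
    unfolding weight_eq FF_def
    by (simp add: sum_distrib_left sum_distrib_right sum_divide_distrib field_simps)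
qed

lemma den_pointwise: "LUE_weight N a x = (1 / (CC a N)^2) * FF a N (\<lambda>_. 0) x"
  unfolding weight_eq FF_def by simp

lemma card_S: "card (S N) = fact N"
  unfolding S_def by (rule card_permutations) simp_all

theorem main:
  "LUE_moment N a p = (\<Sum>k<N. T a p k)"
proof -
  let ?M = "PiM {..<N} (\<lambda>_. lborel) :: (nat \<Rightarrow> real) measure"
  let ?H = "\<Prod>i<N. hh a i"
  have JE: "integrable ?M (FF a N e) \<and> integral\<^sup>L ?M (FF a N e) = (\<Sum>\<sigma>\<in>S N. \<Sum>\<tau>\<in>S N. cst a N e \<sigma> \<tau>)" for e
    using J_expand[where a=a and N=N and e=e] unfolding FF_def[abs_def] by simp
  have num: "integral\<^sup>L ?M (\<lambda>x. (\<Sum>l<N. x l ^ p) * LUE_weight N a x) =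
      (1 / (CC a N)^2) * (?H * (fact N * (\<Sum>k<N. T a p k)))"
  proof -
    have "integral\<^sup>L ?M (\<lambda>x. (\<Sum>l<N. x l ^ p) * LUE_weight N a x) =
        (1 / (CC a N)^2) * (\<Sum>l<N. integral\<^sup>L ?M (FF a N (\<lambda>j. if j = l then p else 0)))"
      unfolding num_pointwise using JE by (simp add: Bochner_Integration.integral_sum)
    also have "(\<Sum>l<N. integral\<^sup>L ?M (FF a N (\<lambda>j. if j = l then p else 0))) =
        (\<Sum>l<N. \<Sum>\<sigma>\<in>S N. ?H * T a p (\<sigma> l))"
    proof (rule sum.cong)
      fix l assume l: "l \<in> {..<N}"
      have "integral\<^sup>L ?M (FF a N (\<lambda>j. if j = l then p else 0)) =
          (\<Sum>\<sigma>\<in>S N. \<Sum>\<tau>\<in>S N. cst a N (\<lambda>j. if j = l then p else 0) \<sigma> \<tau>)"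
        using JE by simp
      also have "\<dots> = (\<Sum>\<sigma>\<in>S N. cst a N (\<lambda>j. if j = l then p else 0) \<sigma> \<sigma>)"
        by (rule sum.cong) (auto intro: sum_S_diag[where l=l])
      also have "\<dots> = (\<Sum>\<sigma>\<in>S N. ?H * T a p (\<sigma> l))"
        by (rule sum.cong) (use l in \<open>auto simp: cst_diagl\<close>)
      finally show "integral\<^sup>L ?M (FF a N (\<lambda>j. if j = l then p else 0)) = (\<Sum>\<sigma>\<in>S N. ?H * T a p (\<sigma> l))" .
    qed simp
    also have "\<dots> = ?H * (\<Sum>\<sigma>\<in>S N. \<Sum>l<N. T a p (\<sigma> l))"
      by (simp add: sum_distrib_left sum.swap[of _ "{..<N}"])
    also have "\<dots> = ?H * (\<Sum>\<sigma>\<in>S N. \<Sum>k<N. T a p k)"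
      by (simp add: sum_perm_T)
    also have "\<dots> = ?H * (fact N * (\<Sum>k<N. T a p k))"
      by (simp add: card_S)
    finally show ?thesis by simp
  qed
  have den: "integral\<^sup>L ?M (\<lambda>x. LUE_weight N a x) = (1 / (CC a N)^2) * (?H * fact N)"
  proof -
    have "integral\<^sup>L ?M (\<lambda>x. LUE_weight N a x) = (1 / (CC a N)^2) * integral\<^sup>L ?M (FF a N (\<lambda>_. 0))"
      unfolding den_pointwise by simp
    also have "integral\<^sup>L ?M (FF a N (\<lambda>_. 0)) = (\<Sum>\<sigma>\<in>S N. \<Sum>\<tau>\<in>S N. cst a N (\<lambda>_. 0) \<sigma> \<tau>)"
      using JE by simp
    also have "\<dots> = (\<Sum>\<sigma>\<in>S N. cst a N (\<lambda>_. 0) \<sigma> \<sigma>)"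
      by (rule sum.cong) (auto intro: sum_S_diag[where l=0])
    also have "\<dots> = (\<Sum>\<sigma>\<in>S N. ?H)"
      by (rule sum.cong) (auto simp: cst_diag0)
    also have "\<dots> = ?H * fact N" by (simp add: card_S)
    finally show ?thesis .
  qed
  show ?thesis
    unfolding LUE_moment_def num den using CC_nz[of a N] hh_nz[of a N] by (simp add: field_simps)
qed

theorem proposition2p1:
  fixes N \<alpha> p :: nat
  shows "LUE_moment N \<alpha> p =
    fact p * (\<Sum>j<N. \<Sum>i\<le>p.
       real ((p choose i) * ((\<alpha> + j) choose i) * ((p - i + j) choose j)))"
proof -
  have "LUE_moment N \<alpha> p = (\<Sum>k<N. T \<alpha> p k)" by (rule main)
  also have "\<dots> = fact p * (\<Sum>j<N. \<Sum>i\<le>p.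
       real ((p choose i) * ((\<alpha> + j) choose i) * ((p - i + j) choose j)))"
    by (simp add: T_def sum_distrib_left)
  finally show ?thesis .
qed

end
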